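(* Let $(A,B)$ be a Katsura pair such that $A$ has no zero rows. If the associated action-restriction pair $(\mathbb{Z}\times E_A^0,E_A)$ is contracting, then it is regular.
   Context: Katsura pair: $N\in\mathbb{N}$, $A\in M_N(\mathbb{N})$ (nonnegative integers), $B\in M_N(\mathbb{Z})$ with $A_{ij}=0\Rightarrow B_{ij}=0$. Graph $E_A$: vertices $\{1,\dots,N\}$, edges $e_{i,j,m}$ ($0\le m<A_{ij}$), $r=i$, $s=j$. The action-restriction pair $(\mathbb{Z}\times E_A^0,E_A)$: the group bundle with elements $a_i^k$ ($a_i^ka_i^l=a_i^{k+l}$, unit $a_i^0$) acts by $a_i^k\cdot e_{i,j,m}=e_{i,j,\hat m}$, $a_i^k|_{e_{i,j,m}}=a_j^{\hat k}$ where $kB_{ij}+m=\hat kA_{ij}+\hat m$, $0\le\hat m<A_{ij}$, extended to finite paths by $g\cdot(e\nu)=(g\cdot e)(g|_e\cdot\nu)$, $g|_{e\nu}=(g|_e)|_\nu$ (the action need not be faithful). Contracting: there is a finite $F$ such that for every $g$ there is $n$ with $g|_\mu\in F$ for all paths $\mu$ of length $\ge n$ with range $d(g)$. Regular: for every $g$ there is $K$ such that $g\cdot\mu=\mu$ and $|\mu|\ge K$ imply $g|_\mu=a^0_{s(\mu)}$. *)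

theory Defs
  imports Main
begin

definition katsura_pair :: "nat \<Rightarrow> (nat \<Rightarrow> nat \<Rightarrow> nat) \<Rightarrow> (nat \<Rightarrow> nat \<Rightarrow> int) \<Rightarrow> bool" where
  "katsura_pair N A B \<longleftrightarrow> 1 \<le> N \<and>
     (\<forall>i\<in>{1..N}. \<forall>j\<in>{1..N}. A i j = 0 \<longrightarrow> B i j = 0)"

definition no_zero_rows :: "nat \<Rightarrow> (nat \<Rightarrow> nat \<Rightarrow> nat) \<Rightarrow> bool" where
  "no_zero_rows N A \<longleftrightarrow> (\<forall>i\<in>{1..N}. \<exists>j\<in>{1..N}. A i j \<noteq> 0)"

text \<open>Edges of E_A: e_{i,j,m} is the triple (i,j,m); range r = i, source s = j.\<close>
type_synonym edge = "nat \<times> nat \<times> nat"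

definition edge_r :: "edge \<Rightarrow> nat" where "edge_r e = fst e"
definition edge_s :: "edge \<Rightarrow> nat" where "edge_s e = fst (snd e)"

definition is_edge :: "nat \<Rightarrow> (nat \<Rightarrow> nat \<Rightarrow> nat) \<Rightarrow> edge \<Rightarrow> bool" where
  "is_edge N A e \<longleftrightarrow> (case e of (i, j, m) \<Rightarrow> i \<in> {1..N} \<and> j \<in> {1..N} \<and> m < A i j)"

text \<open>Elements of the group bundle Z x E_A^0: a_i^k is the pair (k, i); its unit
  space point (domain) is i.\<close>
type_synonym gelt = "int \<times> nat"

definition gdom :: "gelt \<Rightarrow> nat" where "gdom g = snd g"

text \<open>Action and restriction on a single edge (for an edge with range d(g)):
  k B_ij + m = khat A_ij + mhat with 0 <= mhat < A_ij.\<close>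
definition act_edge :: "(nat \<Rightarrow> nat \<Rightarrow> nat) \<Rightarrow> (nat \<Rightarrow> nat \<Rightarrow> int) \<Rightarrow> gelt \<Rightarrow> edge \<Rightarrow> edge" where
  "act_edge A B g e = (case e of (i, j, m) \<Rightarrow>
      (i, j, nat ((fst g * B i j + int m) mod int (A i j))))"

definition res_edge :: "(nat \<Rightarrow> nat \<Rightarrow> nat) \<Rightarrow> (nat \<Rightarrow> nat \<Rightarrow> int) \<Rightarrow> gelt \<Rightarrow> edge \<Rightarrow> gelt" where
  "res_edge A B g e = (case e of (i, j, m) \<Rightarrow>
      ((fst g * B i j + int m) div int (A i j), j))"

text \<open>Finite paths are lists e_1 e_2 ... e_n with s(e_k) = r(e_{k+1}); the path of
  length 0 at vertex v is represented by [] together with the vertex v.\<close>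
fun chain :: "edge list \<Rightarrow> bool" where
  "chain [] = True"
| "chain [e] = True"
| "chain (e # f # rest) = (edge_s e = edge_r f \<and> chain (f # rest))"

definition is_path_at :: "nat \<Rightarrow> (nat \<Rightarrow> nat \<Rightarrow> nat) \<Rightarrow> nat \<Rightarrow> edge list \<Rightarrow> bool" where
  "is_path_at N A v \<mu> \<longleftrightarrow> v \<in> {1..N} \<and> (\<forall>e\<in>set \<mu>. is_edge N A e) \<and> chain \<mu> \<and>
      (\<mu> \<noteq> [] \<longrightarrow> edge_r (hd \<mu>) = v)"

definition path_s :: "nat \<Rightarrow> edge list \<Rightarrow> nat" where
  "path_s v \<mu> = (if \<mu> = [] then v else edge_s (last \<mu>))"

fun act_path :: "(nat \<Rightarrow> nat \<Rightarrow> nat) \<Rightarrow> (nat \<Rightarrow> nat \<Rightarrow> int) \<Rightarrow> gelt \<Rightarrow> edge list \<Rightarrow> edge list" where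
  "act_path A B g [] = []"
| "act_path A B g (e # \<nu>) = act_edge A B g e # act_path A B (res_edge A B g e) \<nu>"

fun res_path :: "(nat \<Rightarrow> nat \<Rightarrow> nat) \<Rightarrow> (nat \<Rightarrow> nat \<Rightarrow> int) \<Rightarrow> gelt \<Rightarrow> edge list \<Rightarrow> gelt" where
  "res_path A B g [] = g"
| "res_path A B g (e # \<nu>) = res_path A B (res_edge A B g e) \<nu>"

definition contracting :: "nat \<Rightarrow> (nat \<Rightarrow> nat \<Rightarrow> nat) \<Rightarrow> (nat \<Rightarrow> nat \<Rightarrow> int) \<Rightarrow> bool" where
  "contracting N A B \<longleftrightarrow> (\<exists>F :: gelt set. finite F \<and>
     (\<forall>g. gdom g \<in> {1..N} \<longrightarrow> (\<exists>n. \<forall>\<mu>. is_path_at N A (gdom g) \<mu> \<and> length \<mu> \<ge> n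
          \<longrightarrow> res_path A B g \<mu> \<in> F)))"

definition regular :: "nat \<Rightarrow> (nat \<Rightarrow> nat \<Rightarrow> nat) \<Rightarrow> (nat \<Rightarrow> nat \<Rightarrow> int) \<Rightarrow> bool" where
  "regular N A B \<longleftrightarrow>
     (\<forall>g. gdom g \<in> {1..N} \<longrightarrow> (\<exists>K. \<forall>\<mu>. is_path_at N A (gdom g) \<mu> \<and>
          act_path A B g \<mu> = \<mu> \<and> length \<mu> \<ge> K
          \<longrightarrow> res_path A B g \<mu> = (0, path_s (gdom g) \<mu>)))"

end

theory Submission
  imports Defs
begin

lemma res_snd:
  "snd (res_path A B g \<mu>) = (if \<mu> = [] then snd g else edge_s (last \<mu>))"
  by (induction \<mu> arbitrary: g) (auto simp: res_edge_def edge_s_def split: prod.splits)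

lemma edge_step:
  fixes a :: int and b k c :: int and m :: nat
  assumes a: "a > 0" and m: "int m < a" and fx: "nat ((k * b + int m) mod a) = m"
  shows "nat ((c * k * b + int m) mod a) = m \<and> (c * k * b + int m) div a = c * ((k * b + int m) div a)"
proof -
  have nn: "0 \<le> (k * b + int m) mod a" using a by simp
  have md: "(k * b + int m) mod a = int m"
  proof -
    have "int (nat ((k * b + int m) mod a)) = int m" using fx by simp
    thus ?thesis using nn by simp
  qed
  define q where "q = (k * b + int m) div a"
  have "a * q + (k * b + int m) mod a = k * b + int m" unfolding q_def using div_mult_mod_eq[of "k * b + int m" a] by (simp add: mult.commute)
  hence q: "k * b = a * q" using md by simp
  have 2: "c * k * b + int m = int m + (c * q) * a" using q by (simp add: algebra_simps)
  have 3: "(int m + (c * q) * a) div a = c * q" using a m by simp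
  have 4: "(int m + (c * q) * a) mod a = int m" using a m by simp
  have "nat ((c * k * b + int m) mod a) = m" unfolding 2 4 by simp
  moreover have "(c * k * b + int m) div a = c * q"
    unfolding 2 3 ..
  ultimately show ?thesis unfolding q_def by simp
qed

lemma mult_lemma:
  assumes "\<forall>e\<in>set \<mu>. is_edge N A e" and "act_path A B (k, v) \<mu> = \<mu>"
  shows "act_path A B (c * k, v) \<mu> = \<mu> \<and> fst (res_path A B (c * k, v) \<mu>) = c * fst (res_path A B (k, v) \<mu>)"
  using assms
proof (induction \<mu> arbitrary: k v)
  case Nil
  then show ?case by simp
next
  case (Cons e \<mu>)
  obtain i j m where e: "e = (i, j, m)" by (cases e) auto
  have ed: "m < A i j" using Cons.prems(1) e by (simp add: is_edge_def)
  have fx: "nat ((k * B i j + int m) mod int (A i j)) = m"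
    using Cons.prems(2) e by (simp add: act_edge_def)
  have rest: "act_path A B ((k * B i j + int m) div int (A i j), j) \<mu> = \<mu>"
    using Cons.prems(2) e by (simp add: res_edge_def)
  from edge_step[of "int (A i j)" m k "B i j" c] ed fx
  have st: "nat ((c * k * B i j + int m) mod int (A i j)) = m"
       "(c * k * B i j + int m) div int (A i j) = c * ((k * B i j + int m) div int (A i j))"
    by auto
  from Cons.IH[OF _ rest] Cons.prems(1)
  have ih: "act_path A B (c * ((k * B i j + int m) div int (A i j)), j) \<mu> = \<mu> \<and>
      fst (res_path A B (c * ((k * B i j + int m) div int (A i j)), j) \<mu>) =
      c * fst (res_path A B ((k * B i j + int m) div int (A i j), j) \<mu>)" by simp
  show ?case using ih st e by (simp add: act_edge_def res_edge_def)
qed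

lemma zero_res:
  "fst (res_path A B (0, v) \<mu>) = 0 \<or> \<not> (\<forall>e\<in>set \<mu>. is_edge N A e)"
proof (induction \<mu> arbitrary: v)
  case Nil then show ?case by simp
next
  case (Cons e \<mu>)
  obtain i j m where e: "e = (i, j, m)" by (cases e) auto
  show ?case
  proof (cases "is_edge N A e")
    case True
    hence "m < A i j" using e by (simp add: is_edge_def)
    hence "int m div int (A i j) = 0" by simp
    then show ?thesis using Cons.IH[of j] e by (auto simp: res_edge_def)
  qed simp
qed

theorem proposition3p6:
  fixes N :: nat and A :: "nat \<Rightarrow> nat \<Rightarrow> nat" and B :: "nat \<Rightarrow> nat \<Rightarrow> int"
  assumes "katsura_pair N A B"
    and "no_zero_rows N A"
    and "contracting N A B"
  shows "regular N A B"
proof -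
  obtain F :: "gelt set" where fin: "finite F" and F: "\<forall>g. gdom g \<in> {1..N} \<longrightarrow> (\<exists>n. \<forall>\<mu>. is_path_at N A (gdom g) \<mu> \<and> length \<mu> \<ge> n
          \<longrightarrow> res_path A B g \<mu> \<in> F)"
    using assms(3) unfolding contracting_def by blast
  define M where "M = Max (insert 0 ((\<lambda>f. \<bar>fst f\<bar>) ` F))"
  have Mb: "\<And>f. f \<in> F \<Longrightarrow> \<bar>fst f\<bar> \<le> M" unfolding M_def using fin by simp
  have M0: "M \<ge> 0" unfolding M_def using fin by simp
  define c where "c = M + 1"
  show ?thesis unfolding regular_def
  proof (intro allI impI)
    fix g :: gelt assume gd: "gdom g \<in> {1..N}"
    obtain k v where g: "g = (k, v)" by (cases g)
    have gd2: "gdom (c * k, v) \<in> {1..N}" using gd g by (simp add: gdom_def)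
    then obtain n where n: "\<And>\<mu>. is_path_at N A v \<mu> \<and> length \<mu> \<ge> n \<Longrightarrow> res_path A B (c * k, v) \<mu> \<in> F"
      using F[rule_format, OF gd2] by (auto simp: gdom_def)
    show "\<exists>K. \<forall>\<mu>. is_path_at N A (gdom g) \<mu> \<and> act_path A B g \<mu> = \<mu> \<and> length \<mu> \<ge> K
          \<longrightarrow> res_path A B g \<mu> = (0, path_s (gdom g) \<mu>)"
    proof (intro exI allI impI)
      fix \<mu> assume h: "is_path_at N A (gdom g) \<mu> \<and> act_path A B g \<mu> = \<mu> \<and> length \<mu> \<ge> n"
      have ed: "\<forall>e\<in>set \<mu>. is_edge N A e" and p: "is_path_at N A v \<mu>"
        using h g by (auto simp: is_path_at_def gdom_def)
      have ml: "fst (res_path A B (c * k, v) \<mu>) = c * fst (res_path A B (k, v) \<mu>)"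
        using mult_lemma[OF ed] h g by auto
      have "res_path A B (c * k, v) \<mu> \<in> F" using n p h by auto
      hence "\<bar>c * fst (res_path A B (k, v) \<mu>)\<bar> \<le> M" using Mb ml by fastforce
      hence cx: "c * \<bar>fst (res_path A B (k, v) \<mu>)\<bar> \<le> M" using M0 unfolding c_def by (simp add: abs_mult)
      have "fst (res_path A B (k, v) \<mu>) = 0"
      proof (rule ccontr)
        assume "fst (res_path A B (k, v) \<mu>) \<noteq> 0"
        hence "1 \<le> \<bar>fst (res_path A B (k, v) \<mu>)\<bar>" by linarith
        hence "c * 1 \<le> c * \<bar>fst (res_path A B (k, v) \<mu>)\<bar>" using M0 unfolding c_def
          by (intro mult_left_mono) auto
        thus False using cx unfolding c_def by simp
      qed
      moreover have "snd (res_path A B g \<mu>) = path_s (gdom g) \<mu>"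
        using res_snd[of A B g \<mu>] g by (simp add: path_s_def gdom_def)
      ultimately show "res_path A B g \<mu> = (0, path_s (gdom g) \<mu>)" using g
        by (metis prod.collapse)
    qed
  qed
qed

end
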